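(* Consider a liquid ($l$), its vapor ($v$) and a gas ($g$), each with extensive entropy $S_k$ of $(M_k,V_k,E_k)$ that is concave, positively homogeneous of degree 1, upper semi-continuous, with non-empty closed convex domain, and $\mathcal C^2$ with $\partial S_k/\partial E>0$; let $s_k(\tau,e)=S_k(1,\tau,e)$, $1/T_k=\partial_e s_k$, $p_k/T_k=\partial_\tau s_k$. Fix the gas mass fraction $\varphi_g\in[0,1]$ and define, for $\tau,e>0$, $$s_{PT}(\tau,e,\varphi_g)=\max\Big\{\sum_{k}\varphi_k s_k(\tau_k,e_k)\ :\ \varphi_l+\varphi_v=1-\varphi_g,\ e=\sum_k\varphi_ke_k,\ \tau=\varphi_l\tau_l+\varphi_g\tau_g,\ \varphi_v\tau_v=\varphi_g\tau_g\Big\},$$ the maximum being over $\varphi_l,\varphi_v\ge0$ and $(\tau_k,e_k)_k$, and assume it is attained at an interior point, at which the phases have a common temperature $T=T_l=T_g=T_v$ and the mixture pressure is $p=p_l=p_g+p_v$. Then $s_{PT}$ depends only on $(\tau,e)$ and satisfies $T\,ds_{PT}=de+p\,d\tau$ (i.e. $\partial_e s_{PT}=1/T$, $\partial_\tau s_{PT}=p/T$), where $T$ and $p$ are the mixture temperature and pressure at equilibrium.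
   Context: $\varphi_k$, $\tau_k$, $e_k$ are the mass fraction, specific volume and specific internal energy of phase $k$; vapor and gas occupy the same volume ($\varphi_v\tau_v=\varphi_g\tau_g$) while the liquid occupies a separate volume; mass transfer is allowed between liquid and vapor only. *)

theory Defs
  imports "HOL-Analysis.Analysis"
begin

text \<open>Extensive variables of a phase: (M, V, E) :: real \<times> real \<times> real.
  An extensive entropy is a real function S on its domain D (it is -\<infinity> outside D).\<close>

definition usc_on :: "(real \<times> real \<times> real) set \<Rightarrow> (real \<times> real \<times> real \<Rightarrow> real) \<Rightarrow> bool" where
  "usc_on D S \<longleftrightarrow> (\<forall>x\<in>D. \<forall>a. S x < a \<longrightarrow> (\<forall>\<^sub>F y in at x within D. S y < a))"

definition C2_on :: "(real \<times> real \<times> real) set \<Rightarrow> (real \<times> real \<times> real \<Rightarrow> real) \<Rightarrow> bool" where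
  "C2_on U S \<longleftrightarrow>
     (\<exists>S1 :: real \<times> real \<times> real \<Rightarrow> (real \<times> real \<times> real) \<Rightarrow>\<^sub>L real.
      \<exists>S2 :: real \<times> real \<times> real \<Rightarrow> (real \<times> real \<times> real) \<Rightarrow>\<^sub>L ((real \<times> real \<times> real) \<Rightarrow>\<^sub>L real).
        (\<forall>x\<in>U. (S has_derivative blinfun_apply (S1 x)) (at x)) \<and>
        (\<forall>x\<in>U. (S1 has_derivative blinfun_apply (S2 x)) (at x)) \<and>
        continuous_on U S2)"

definition extensive_entropy :: "(real \<times> real \<times> real) set \<Rightarrow> (real \<times> real \<times> real \<Rightarrow> real) \<Rightarrow> bool" where
  "extensive_entropy D S \<longleftrightarrow>
     D \<noteq> {} \<and> closed D \<and> convex D \<and>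
     (\<forall>x\<in>D. \<forall>t>0. t *\<^sub>R x \<in> D) \<and>
     concave_on D S \<and>
     (\<forall>x\<in>D. \<forall>t>0. S (t *\<^sub>R x) = t * S x) \<and>
     usc_on D S \<and>
     C2_on (interior D) S \<and>
     (\<forall>x\<in>interior D. \<forall>S'. (S has_derivative S') (at x) \<longrightarrow> S' (0, 0, 1) > 0)"

definition spec :: "(real \<times> real \<times> real \<Rightarrow> real) \<Rightarrow> real \<Rightarrow> real \<Rightarrow> real" where
  "spec S \<tau> e = S (1, \<tau>, e)"

definition temp :: "(real \<times> real \<times> real \<Rightarrow> real) \<Rightarrow> real \<Rightarrow> real \<Rightarrow> real" where
  "temp S \<tau> e = 1 / deriv (\<lambda>e'. spec S \<tau> e') e"

definition pres :: "(real \<times> real \<times> real \<Rightarrow> real) \<Rightarrow> real \<Rightarrow> real \<Rightarrow> real" where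
  "pres S \<tau> e = temp S \<tau> e * deriv (\<lambda>\<tau>'. spec S \<tau>' e) \<tau>"

text \<open>A configuration: (\<phi>_l, \<phi>_v, (\<tau>_l,e_l), (\<tau>_v,e_v), (\<tau>_g,e_g)).\<close>
type_synonym config = "real \<times> real \<times> (real \<times> real) \<times> (real \<times> real) \<times> (real \<times> real)"

definition feasible ::
  "(real \<times> real \<times> real) set \<Rightarrow> (real \<times> real \<times> real) set \<Rightarrow> (real \<times> real \<times> real) set \<Rightarrow>
   real \<Rightarrow> real \<Rightarrow> real \<Rightarrow> config \<Rightarrow> bool" where
  "feasible Dl Dv Dg \<phi>g \<tau> e c \<longleftrightarrow>
     (case c of (\<phi>l, \<phi>v, (\<tau>l, el), (\<tau>v, ev), (\<tau>g, eg)) \<Rightarrow>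
        \<phi>l \<ge> 0 \<and> \<phi>v \<ge> 0 \<and> \<phi>l + \<phi>v = 1 - \<phi>g \<and>
        e = \<phi>l * el + \<phi>v * ev + \<phi>g * eg \<and>
        \<tau> = \<phi>l * \<tau>l + \<phi>g * \<tau>g \<and>
        \<phi>v * \<tau>v = \<phi>g * \<tau>g \<and>
        (1, \<tau>l, el) \<in> Dl \<and> (1, \<tau>v, ev) \<in> Dv \<and> (1, \<tau>g, eg) \<in> Dg)"

definition mix_entropy ::
  "(real \<times> real \<times> real \<Rightarrow> real) \<Rightarrow> (real \<times> real \<times> real \<Rightarrow> real) \<Rightarrow> (real \<times> real \<times> real \<Rightarrow> real) \<Rightarrow>
   real \<Rightarrow> config \<Rightarrow> real" where
  "mix_entropy Sl Sv Sg \<phi>g c =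
     (case c of (\<phi>l, \<phi>v, (\<tau>l, el), (\<tau>v, ev), (\<tau>g, eg)) \<Rightarrow>
        \<phi>l * spec Sl \<tau>l el + \<phi>v * spec Sv \<tau>v ev + \<phi>g * spec Sg \<tau>g eg)"

definition s_PT ::
  "(real \<times> real \<times> real) set \<Rightarrow> (real \<times> real \<times> real) set \<Rightarrow> (real \<times> real \<times> real) set \<Rightarrow>
   (real \<times> real \<times> real \<Rightarrow> real) \<Rightarrow> (real \<times> real \<times> real \<Rightarrow> real) \<Rightarrow> (real \<times> real \<times> real \<Rightarrow> real) \<Rightarrow>
   real \<Rightarrow> real \<Rightarrow> real \<Rightarrow> real" where
  "s_PT Dl Dv Dg Sl Sv Sg \<tau> e \<phi>g =
     Sup (mix_entropy Sl Sv Sg \<phi>g ` {c. feasible Dl Dv Dg \<phi>g \<tau> e c})"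

end

theory Submission
  imports Defs
begin

lemma concave_tangent:
  fixes S :: "'a::real_normed_vector \<Rightarrow> real"
  assumes conc: "concave_on D S" and X: "X \<in> D" and Y: "Y \<in> D"
    and der: "(S has_derivative S') (at X)"
  shows "S Y \<le> S X + S' (Y - X)"
proof -
  define g where "g t = S (X + t *\<^sub>R (Y - X))" for t :: real
  have "((\<lambda>t. X + t *\<^sub>R (Y - X)) has_derivative (\<lambda>t. t *\<^sub>R (Y - X))) (at 0)"
    by (auto intro!: derivative_eq_intros)
  then have "(g has_derivative (\<lambda>t. S' (t *\<^sub>R (Y - X)))) (at 0)"
    unfolding g_def using has_derivative_compose[of "\<lambda>t. X + t *\<^sub>R (Y - X)" _ 0 UNIV S S'] der
    by simp
  moreover have "bounded_linear S'" using der has_derivative_bounded_linear by blast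
  ultimately have "(g has_derivative (\<lambda>t. t * S' (Y - X))) (at 0)"
    by (simp add: linear_simps)
  then have "(g has_derivative (*) (S' (Y - X))) (at 0)"
    by (rule has_derivative_eq_rhs) (auto simp: fun_eq_iff)
  then have "DERIV g 0 :> S' (Y - X)"
    unfolding has_field_derivative_def .
  then have lim: "((\<lambda>h. (g (0 + h) - g 0) / h) \<longlongrightarrow> S' (Y - X)) (at 0)"
    using DERIV_def by blast
  then have lim': "((\<lambda>h. (g (0 + h) - g 0) / h) \<longlongrightarrow> S' (Y - X)) (at_right 0)"
    using tendsto_within_subset[OF lim, of "{0<..}"] by simp
  have ev: "\<forall>\<^sub>F h in at_right 0. S Y - S X \<le> (g (0 + h) - g 0) / h"
    using eventually_at_right_real[OF zero_less_one]
  proof (rule eventually_mono)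
    fix h :: real assume h: "h \<in> {0<..<1}"
    have "(1 - h) * S X + h * S Y \<le> S ((1 - h) *\<^sub>R X + h *\<^sub>R Y)"
      using concave_onD[OF conc, of h X Y] h X Y by auto
    also have "(1 - h) *\<^sub>R X + h *\<^sub>R Y = X + h *\<^sub>R (Y - X)" by (simp add: algebra_simps)
    finally have "(1 - h) * S X + h * S Y \<le> g h" by (simp add: g_def)
    moreover have "g 0 = S X" by (simp add: g_def)
    ultimately show "S Y - S X \<le> (g (0 + h) - g 0) / h" using h
      by (simp add: field_simps)
  qed
  have "S Y - S X \<le> S' (Y - X)"
    using tendsto_le[OF _ lim' tendsto_const ev] by simp
  then show ?thesis by simp
qed

lemma lin3:
  assumes "bounded_linear f"
  shows "f (0::real, u::real, v::real) = u * f (0, 1, 0) + v * (f (0, 0, 1) :: real)"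
proof -
  have "(0::real, u, v) = u *\<^sub>R (0, 1, 0) + v *\<^sub>R (0, 0, 1)" by simp
  then have "f (0, u, v) = f (u *\<^sub>R (0, 1, 0) + v *\<^sub>R (0, 0, 1))" by simp
  also have "\<dots> = f (u *\<^sub>R (0, 1, 0)) + f (v *\<^sub>R (0, 0, 1))"
    by (rule linear_add[OF bounded_linear.linear[OF assms]])
  also have "\<dots> = u *\<^sub>R f (0, 1, 0) + v *\<^sub>R f (0, 0, 1)"
    by (simp only: linear_scale[OF bounded_linear.linear[OF assms]])
  finally show ?thesis by simp
qed

lemma phase:
  assumes ent: "extensive_entropy D S" and X: "(1, t, x) \<in> interior D"
  shows "((\<lambda>(a, b). spec S a b) has_derivative
            (\<lambda>(u, v). deriv (\<lambda>\<tau>'. spec S \<tau>' x) t * u + deriv (\<lambda>e'. spec S t e') x * v)) (at (t, x))"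
    and "deriv (\<lambda>e'. spec S t e') x > 0"
    and "\<And>t' x'. (1, t', x') \<in> D \<Longrightarrow> spec S t' x' \<le> spec S t x
           + deriv (\<lambda>\<tau>'. spec S \<tau>' x) t * (t' - t) + deriv (\<lambda>e'. spec S t e') x * (x' - x)"
proof -
  have C2: "C2_on (interior D) S" using ent unfolding extensive_entropy_def by (elim conjE) assumption
  have pos0: "\<forall>x\<in>interior D. \<forall>S'. (S has_derivative S') (at x) \<longrightarrow> S' (0, 0, 1) > 0"
    using ent unfolding extensive_entropy_def by (elim conjE) assumption
  have conc: "concave_on D S" using ent unfolding extensive_entropy_def by (elim conjE) assumption
  from C2 obtain S1 :: "real \<times> real \<times> real \<Rightarrow> (real \<times> real \<times> real) \<Rightarrow>\<^sub>L real"
    where hd: "\<And>y. y \<in> interior D \<Longrightarrow> (S has_derivative blinfun_apply (S1 y)) (at y)"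
    unfolding C2_on_def by blast
  define S' where "S' = blinfun_apply (S1 (1, t, x))"
  have dS: "(S has_derivative S') (at (1, t, x))" using hd X S'_def by simp
  have bl: "bounded_linear S'" using dS has_derivative_bounded_linear by blast
  have pos: "S' (0, 0, 1) > 0" using pos0 X dS by blast
  define a1 where "a1 = S' (0, 1, 0)"
  define a2 where "a2 = S' (0, 0, 1)"
  have lin: "\<And>u v. S' (0, u, v) = u * a1 + v * a2" unfolding a1_def a2_def by (rule lin3[OF bl])
  have d1: "((\<lambda>p::real\<times>real. (1::real, fst p, snd p)) has_derivative (\<lambda>p. (0, fst p, snd p))) (at (t, x))"
    by (auto intro!: derivative_eq_intros)
  have "((\<lambda>p::real\<times>real. S (1, fst p, snd p)) has_derivative (\<lambda>p. S' (0, fst p, snd p))) (at (t, x))"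
    using has_derivative_compose[OF d1, of S S'] dS by simp
  then have D2: "((\<lambda>p::real\<times>real. spec S (fst p) (snd p)) has_derivative
      (\<lambda>p. S' (0, 1, 0) * fst p + S' (0, 0, 1) * snd p)) (at (t, x))"
    unfolding spec_def by (rule has_derivative_eq_rhs) (auto simp: spec_def fun_eq_iff lin mult.commute)
  have e1: "((\<lambda>a::real. (1::real, a, x)) has_derivative (\<lambda>h. (0, h, 0))) (at t)"
    by (auto intro!: derivative_eq_intros)
  have "((\<lambda>a. S (1, a, x)) has_derivative (\<lambda>h. S' (0, h, 0))) (at t)"
    using has_derivative_compose[OF e1, of S S'] dS by simp
  then have "((\<lambda>a. spec S a x) has_derivative (*) (S' (0, 1, 0))) (at t)"
    unfolding spec_def by (rule has_derivative_eq_rhs) (auto simp: spec_def fun_eq_iff lin mult.commute)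
  then have B: "deriv (\<lambda>\<tau>'. spec S \<tau>' x) t = S' (0, 1, 0)"
    by (intro DERIV_imp_deriv) (simp add: has_field_derivative_def)
  have e2: "((\<lambda>a::real. (1::real, t, a)) has_derivative (\<lambda>h. (0, 0, h))) (at x)"
    by (auto intro!: derivative_eq_intros)
  have "((\<lambda>a. S (1, t, a)) has_derivative (\<lambda>h. S' (0, 0, h))) (at x)"
    using has_derivative_compose[OF e2, of S S'] dS by simp
  then have "((\<lambda>a. spec S t a) has_derivative (*) (S' (0, 0, 1))) (at x)"
    unfolding spec_def by (rule has_derivative_eq_rhs) (auto simp: spec_def fun_eq_iff lin mult.commute)
  then have C: "deriv (\<lambda>e'. spec S t e') x = S' (0, 0, 1)"
    by (intro DERIV_imp_deriv) (simp add: has_field_derivative_def)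
  show "((\<lambda>(a, b). spec S a b) has_derivative
            (\<lambda>(u, v). deriv (\<lambda>\<tau>'. spec S \<tau>' x) t * u + deriv (\<lambda>e'. spec S t e') x * v)) (at (t, x))"
    using D2 unfolding B C by (simp add: split_beta')
  show "deriv (\<lambda>e'. spec S t e') x > 0" using pos C by simp
  fix t' x' assume Y: "(1, t', x') \<in> D"
  have "S (1, t', x') \<le> S (1, t, x) + S' ((1, t', x') - (1, t, x))"
    using concave_tangent[OF conc _ Y dS] X interior_subset by blast
  also have "S' ((1, t', x') - (1, t, x)) = S' (0, t' - t, x' - x)" by simp
  also have "\<dots> = (t' - t) * S' (0, 1, 0) + (x' - x) * S' (0, 0, 1)" by (rule lin3[OF bl])
  finally show "spec S t' x' \<le> spec S t x
           + deriv (\<lambda>\<tau>'. spec S \<tau>' x) t * (t' - t) + deriv (\<lambda>e'. spec S t e') x * (x' - x)"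
    by (simp only: B C) (simp add: spec_def algebra_simps)
qed

lemma chain2:
  assumes d: "((\<lambda>(a, b). spec S a b) has_derivative (\<lambda>(u, v). B * u + C * v)) (at (t, x))"
    and f1: "(f1 has_real_derivative d1) (at z)" and f2: "(f2 has_real_derivative d2) (at z)"
    and "f1 z = t" "f2 z = x"
  shows "((\<lambda>\<delta>. spec S (f1 \<delta>) (f2 \<delta>)) has_real_derivative (B * d1 + C * d2)) (at z)"
proof -
  have P: "((\<lambda>\<delta>. (f1 \<delta>, f2 \<delta>)) has_derivative (\<lambda>h. (d1 * h, d2 * h))) (at z)"
    using has_derivative_Pair[OF f1[unfolded has_field_derivative_def] f2[unfolded has_field_derivative_def]] .
  have d': "((\<lambda>(a, b). spec S a b) has_derivative (\<lambda>(u, v). B * u + C * v)) (at (f1 z, f2 z))"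
    using d assms(4,5) by simp
  have "((\<lambda>\<delta>. (\<lambda>(a, b). spec S a b) (f1 \<delta>, f2 \<delta>)) has_derivative
      (\<lambda>h. (\<lambda>(u, v). B * u + C * v) (d1 * h, d2 * h))) (at z)"
    by (rule has_derivative_compose[OF P d'])
  then have "((\<lambda>\<delta>. spec S (f1 \<delta>) (f2 \<delta>)) has_derivative (\<lambda>h. B * (d1 * h) + C * (d2 * h))) (at z)"
    by simp
  then have "((\<lambda>\<delta>. spec S (f1 \<delta>) (f2 \<delta>)) has_derivative (*) (B * d1 + C * d2)) (at z)"
    by (rule has_derivative_eq_rhs) (auto simp: fun_eq_iff algebra_simps)
  then show ?thesis by (simp add: has_field_derivative_def)
qed

lemma squeeze:
  fixes f G :: "real \<times> real \<Rightarrow> real"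
  assumes dG: "(G has_derivative D) (at x0)"
    and ev: "\<forall>\<^sub>F y in at x0. G y \<le> f y \<and> f y \<le> f x0 + D (y - x0)"
    and eq: "G x0 = f x0"
  shows "(f has_derivative D) (at x0)"
proof -
  have bl: "bounded_linear D" using dG has_derivative_bounded_linear by blast
  have lim: "((\<lambda>y. norm ((G y - G x0) - D (y - x0)) / norm (y - x0)) \<longlongrightarrow> 0) (at x0)"
    using dG unfolding has_derivative_iff_norm by blast
  have "((\<lambda>y. norm ((f y - f x0) - D (y - x0)) / norm (y - x0)) \<longlongrightarrow> 0) (at x0)"
  proof (rule tendsto_sandwich[OF _ _ tendsto_const lim])
    show "\<forall>\<^sub>F y in at x0. 0 \<le> norm ((f y - f x0) - D (y - x0)) / norm (y - x0)" by simp
    show "\<forall>\<^sub>F y in at x0. norm ((f y - f x0) - D (y - x0)) / norm (y - x0)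
         \<le> norm ((G y - G x0) - D (y - x0)) / norm (y - x0)"
      using ev
    proof (rule eventually_mono)
      fix y assume h: "G y \<le> f y \<and> f y \<le> f x0 + D (y - x0)"
      have "norm ((f y - f x0) - D (y - x0)) \<le> norm ((G y - G x0) - D (y - x0))"
        using h eq by simp
      then show "norm ((f y - f x0) - D (y - x0)) / norm (y - x0)
         \<le> norm ((G y - G x0) - D (y - x0)) / norm (y - x0)"
        by (simp add: divide_right_mono)
    qed
  qed
  then show ?thesis using bl unfolding has_derivative_iff_norm by blast
qed

theorem proposition2p5:
  fixes Dl Dv Dg :: "(real \<times> real \<times> real) set"
    and Sl Sv Sg :: "real \<times> real \<times> real \<Rightarrow> real"
    and \<phi>g \<tau> e \<phi>l \<phi>v \<tau>l el \<tau>v ev \<tau>g eg :: real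
  assumes "extensive_entropy Dl Sl" "extensive_entropy Dv Sv" "extensive_entropy Dg Sg"
    and "0 \<le> \<phi>g" "\<phi>g \<le> 1" "\<tau> > 0" "e > 0"
    and opt_feas: "feasible Dl Dv Dg \<phi>g \<tau> e (\<phi>l, \<phi>v, (\<tau>l, el), (\<tau>v, ev), (\<tau>g, eg))"
    and opt_max: "\<forall>c. feasible Dl Dv Dg \<phi>g \<tau> e c \<longrightarrow>
        mix_entropy Sl Sv Sg \<phi>g c \<le> mix_entropy Sl Sv Sg \<phi>g (\<phi>l, \<phi>v, (\<tau>l, el), (\<tau>v, ev), (\<tau>g, eg))"
    and interior: "\<phi>l > 0" "\<phi>v > 0"
      "(1, \<tau>l, el) \<in> interior Dl" "(1, \<tau>v, ev) \<in> interior Dv" "(1, \<tau>g, eg) \<in> interior Dg"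
    and temps: "temp Sl \<tau>l el = temp Sg \<tau>g eg" "temp Sg \<tau>g eg = temp Sv \<tau>v ev"
    and press: "pres Sl \<tau>l el = pres Sg \<tau>g eg + pres Sv \<tau>v ev"
  shows "let T = temp Sl \<tau>l el; p = pres Sl \<tau>l el in
           ((\<lambda>(\<tau>', e'). s_PT Dl Dv Dg Sl Sv Sg \<tau>' e' \<phi>g)
              has_derivative (\<lambda>(d\<tau>, de). (p / T) * d\<tau> + (1 / T) * de)) (at (\<tau>, e))"
proof -
  define Bl where "Bl = deriv (\<lambda>\<tau>'. spec Sl \<tau>' el) \<tau>l"
  define Cl where "Cl = deriv (\<lambda>e'. spec Sl \<tau>l e') el"
  define Bv where "Bv = deriv (\<lambda>\<tau>'. spec Sv \<tau>' ev) \<tau>v"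
  define Cv where "Cv = deriv (\<lambda>e'. spec Sv \<tau>v e') ev"
  define Bg where "Bg = deriv (\<lambda>\<tau>'. spec Sg \<tau>' eg) \<tau>g"
  define Cg where "Cg = deriv (\<lambda>e'. spec Sg \<tau>g e') eg"
  define sl where "sl = spec Sl \<tau>l el"
  define sv where "sv = spec Sv \<tau>v ev"
  define sg where "sg = spec Sg \<tau>g eg"
  note pl = phase[OF assms(1) interior(3), folded Bl_def Cl_def sl_def]
  note pv = phase[OF assms(2) interior(4), folded Bv_def Cv_def sv_def]
  note pg = phase[OF assms(3) interior(5), folded Bg_def Cg_def sg_def]
  have Tl: "temp Sl \<tau>l el = 1 / Cl" by (simp add: temp_def Cl_def)
  have Tv: "temp Sv \<tau>v ev = 1 / Cv" by (simp add: temp_def Cv_def)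
  have Tg: "temp Sg \<tau>g eg = 1 / Cg" by (simp add: temp_def Cg_def)
  have Cvl: "Cv = Cl" and Cgl: "Cg = Cl" using temps pl(2) pv(2) pg(2) unfolding Tl Tv Tg by auto
  have Pl: "pres Sl \<tau>l el = Bl / Cl" by (simp add: pres_def Tl Bl_def)
  have Pv: "pres Sv \<tau>v ev = Bv / Cl" by (simp add: pres_def Tv Bv_def Cvl)
  have Pg: "pres Sg \<tau>g eg = Bg / Cl" by (simp add: pres_def Tg Bg_def Cgl)
  have Bsum: "Bl = Bg + Bv" using press pl(2) unfolding Pl Pv Pg by (simp add: field_simps)
  define Al where "Al = sl - Bl * \<tau>l - Cl * el"
  define Av where "Av = sv - Bv * \<tau>v - Cl * ev"
  define Ag where "Ag = sg - Bg * \<tau>g - Cl * eg"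
  have tanl: "\<And>t x. (1, t, x) \<in> Dl \<Longrightarrow> spec Sl t x \<le> Al + Bl * t + Cl * x"
    using pl(3) unfolding Al_def by (simp add: algebra_simps)
  have tanv: "\<And>t x. (1, t, x) \<in> Dv \<Longrightarrow> spec Sv t x \<le> Av + Bv * t + Cl * x"
    using pv(3) unfolding Av_def Cvl by (simp add: algebra_simps)
  have tang: "\<And>t x. (1, t, x) \<in> Dg \<Longrightarrow> spec Sg t x \<le> Ag + Bg * t + Cl * x"
    using pg(3) unfolding Ag_def Cgl by (simp add: algebra_simps)
  have Aeq: "Al = Av"
  proof -
    define f1 where "f1 = (\<lambda>d::real. \<phi>l * \<tau>l / (\<phi>l + d))"
    define f2 where "f2 = (\<lambda>d::real. (\<phi>l * el + d * ev) / (\<phi>l + d))"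
    define g1 where "g1 = (\<lambda>d::real. \<phi>v * \<tau>v / (\<phi>v - d))"
    define F where "F = (\<lambda>d. (\<phi>l + d) * spec Sl (f1 d) (f2 d) + (\<phi>v - d) * spec Sv (g1 d) ev
                            + \<phi>g * spec Sg \<tau>g eg)"
    have df1: "(f1 has_real_derivative (- \<tau>l / \<phi>l)) (at 0)"
      unfolding f1_def using interior(1)
      by (auto intro!: derivative_eq_intros simp: field_simps power2_eq_square)
    have df2: "(f2 has_real_derivative ((ev - el) / \<phi>l)) (at 0)"
      unfolding f2_def using interior(1)
      by (auto intro!: derivative_eq_intros simp: field_simps power2_eq_square)
    have dg1: "(g1 has_real_derivative (\<tau>v / \<phi>v)) (at 0)"
      unfolding g1_def using interior(2)
      by (auto intro!: derivative_eq_intros simp: field_simps power2_eq_square)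
    have f10: "f1 0 = \<tau>l" and f20: "f2 0 = el" and g10: "g1 0 = \<tau>v"
      using interior(1,2) by (auto simp: f1_def f2_def g1_def)
    have hl: "((\<lambda>d. spec Sl (f1 d) (f2 d)) has_real_derivative (Bl * (- \<tau>l / \<phi>l) + Cl * ((ev - el) / \<phi>l))) (at 0)"
      by (rule chain2[OF pl(1) df1 df2]) (simp_all add: f10 f20)
    have hv: "((\<lambda>d. spec Sv (g1 d) ((\<lambda>_. ev) d)) has_real_derivative (Bv * (\<tau>v / \<phi>v) + Cv * 0)) (at 0)"
      by (rule chain2[OF pv(1) dg1]) (auto intro!: derivative_eq_intros simp: g10)
    have a1: "((\<lambda>d. \<phi>l + d) has_real_derivative 1) (at 0)" by (auto intro!: derivative_eq_intros)
    have a2: "((\<lambda>d. \<phi>v - d) has_real_derivative (- 1)) (at 0)" by (auto intro!: derivative_eq_intros)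
    have m1: "((\<lambda>d. (\<phi>l + d) * spec Sl (f1 d) (f2 d)) has_real_derivative
        ((\<phi>l + 0) * (Bl * (- \<tau>l / \<phi>l) + Cl * ((ev - el) / \<phi>l)) + 1 * spec Sl (f1 0) (f2 0))) (at 0)"
      by (rule DERIV_mult'[OF a1 hl])
    have m2: "((\<lambda>d. (\<phi>v - d) * spec Sv (g1 d) ev) has_real_derivative
        ((\<phi>v - 0) * (Bv * (\<tau>v / \<phi>v) + Cv * 0) + (- 1) * spec Sv (g1 0) ev)) (at 0)"
      by (rule DERIV_mult'[OF a2 hv])
    have dF: "(F has_real_derivative
        ((\<phi>l + 0) * (Bl * (- \<tau>l / \<phi>l) + Cl * ((ev - el) / \<phi>l)) + 1 * spec Sl (f1 0) (f2 0)
         + ((\<phi>v - 0) * (Bv * (\<tau>v / \<phi>v) + Cv * 0) + (- 1) * spec Sv (g1 0) ev) + 0)) (at 0)"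
      unfolding F_def by (rule DERIV_add[OF DERIV_add[OF m1 m2] DERIV_const])
    have "\<forall>\<^sub>F d in at (0::real). (1, f1 d, f2 d) \<in> interior Dl \<and> (1, g1 d, ev) \<in> interior Dv
            \<and> \<bar>d\<bar> < min \<phi>l \<phi>v"
    proof (intro eventually_conj)
      have "((\<lambda>d. (1::real, f1 d, f2 d)) \<longlongrightarrow> (1, \<tau>l, el)) (at 0)"
        unfolding f1_def f2_def using interior(1)
        by (auto intro!: tendsto_eq_intros)
      then show "\<forall>\<^sub>F d in at (0::real). (1, f1 d, f2 d) \<in> interior Dl"
        using topological_tendstoD interior(3) open_interior by blast
      have "((\<lambda>d. (1::real, g1 d, ev)) \<longlongrightarrow> (1, \<tau>v, ev)) (at 0)"
        unfolding g1_def using interior(2)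
        by (auto intro!: tendsto_eq_intros)
      then show "\<forall>\<^sub>F d in at (0::real). (1, g1 d, ev) \<in> interior Dv"
        using topological_tendstoD interior(4) open_interior by blast
      have ab: "((\<lambda>d. \<bar>d\<bar>) \<longlongrightarrow> \<bar>0::real\<bar>) (at 0)"
        by (auto intro!: tendsto_eq_intros)
      show "\<forall>\<^sub>F d in at (0::real). \<bar>d\<bar> < min \<phi>l \<phi>v"
        using order_tendstoD(2)[OF ab, of "min \<phi>l \<phi>v"] interior(1,2) by simp
    qed
    then obtain r where r: "r > 0" and hr: "\<And>d. d \<noteq> 0 \<Longrightarrow> dist d 0 < r \<Longrightarrow>
        (1, f1 d, f2 d) \<in> interior Dl \<and> (1, g1 d, ev) \<in> interior Dv \<and> \<bar>d\<bar> < min \<phi>l \<phi>v"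
      unfolding eventually_at by auto
    have "\<forall>y. \<bar>0 - y\<bar> < r \<longrightarrow> F y \<le> F 0"
    proof (intro allI impI)
      fix y :: real assume y: "\<bar>0 - y\<bar> < r"
      show "F y \<le> F 0"
      proof (cases "y = 0")
        case True then show ?thesis by simp
      next
        case False
        with hr y have H: "(1, f1 y, f2 y) \<in> interior Dl" "(1, g1 y, ev) \<in> interior Dv"
          "\<bar>y\<bar> < min \<phi>l \<phi>v" by (auto simp: dist_real_def)
        have p1: "\<phi>l + y > 0" "\<phi>v - y > 0" using H(3) by auto
        have "feasible Dl Dv Dg \<phi>g \<tau> e (\<phi>l + y, \<phi>v - y, (f1 y, f2 y), (g1 y, ev), (\<tau>g, eg))"
        proof -
          have q1: "(\<phi>l + y) * f2 y = \<phi>l * el + y * ev" using p1 by (simp add: f2_def)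
          have q2: "(\<phi>l + y) * f1 y = \<phi>l * \<tau>l" using p1 by (simp add: f1_def)
          have q3: "(\<phi>v - y) * g1 y = \<phi>v * \<tau>v" using p1 by (simp add: g1_def)
          have o: "\<phi>l + \<phi>v = 1 - \<phi>g" "e = \<phi>l * el + \<phi>v * ev + \<phi>g * eg"
            "\<tau> = \<phi>l * \<tau>l + \<phi>g * \<tau>g" "\<phi>v * \<tau>v = \<phi>g * \<tau>g" "(1, \<tau>g, eg) \<in> Dg"
            using opt_feas unfolding feasible_def by auto
          have m: "(1, f1 y, f2 y) \<in> Dl" "(1, g1 y, ev) \<in> Dv" using H interior_subset by auto
          show ?thesis unfolding feasible_def using p1 q1 q2 q3 o m
            by (simp add: algebra_simps)
        qed
        then have "mix_entropy Sl Sv Sg \<phi>g (\<phi>l + y, \<phi>v - y, (f1 y, f2 y), (g1 y, ev), (\<tau>g, eg))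
            \<le> mix_entropy Sl Sv Sg \<phi>g (\<phi>l, \<phi>v, (\<tau>l, el), (\<tau>v, ev), (\<tau>g, eg))"
          using opt_max by blast
        then show ?thesis unfolding F_def mix_entropy_def using f10 f20 g10 by simp
      qed
    qed
    note z = DERIV_local_max[OF dF r this]
    have z1: "(\<phi>l + 0) * (Bl * (- \<tau>l / \<phi>l) + Cl * ((ev - el) / \<phi>l)) = - Bl * \<tau>l + Cl * (ev - el)"
      using interior(1) by (simp add: field_simps)
    have z2: "(\<phi>v - 0) * (Bv * (\<tau>v / \<phi>v) + Cv * 0) = Bv * \<tau>v"
      using interior(2) by (simp add: field_simps)
    from z[unfolded z1 z2 f10 f20 g10, folded sl_def sv_def]
    show ?thesis unfolding Al_def Av_def by (simp add: algebra_simps)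
  qed
  define L where "L = (\<lambda>t x. (1 - \<phi>g) * Al + \<phi>g * Ag + Bl * t + Cl * x)"
  have ident: "\<And>a b t1 x1 t2 x2 t3 x3 t' x'. a + b = 1 - \<phi>g \<Longrightarrow> x' = a * x1 + b * x2 + \<phi>g * x3 \<Longrightarrow>
      t' = a * t1 + \<phi>g * t3 \<Longrightarrow> b * t2 = \<phi>g * t3 \<Longrightarrow>
      a * (Al + Bl * t1 + Cl * x1) + b * (Av + Bv * t2 + Cl * x2) + \<phi>g * (Ag + Bg * t3 + Cl * x3) = L t' x'"
  proof -
    fix a b t1 x1 t2 x2 t3 x3 t' x'
    assume h: "a + b = 1 - \<phi>g" "x' = a * x1 + b * x2 + \<phi>g * x3" "t' = a * t1 + \<phi>g * t3" "b * t2 = \<phi>g * t3"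
    have "a * (Al + Bl * t1 + Cl * x1) + b * (Av + Bv * t2 + Cl * x2) + \<phi>g * (Ag + Bg * t3 + Cl * x3)
        = (a + b) * Al + \<phi>g * Ag + Bl * (a * t1) + Bv * (b * t2) + Bg * (\<phi>g * t3) + Cl * (a * x1 + b * x2 + \<phi>g * x3)"
      unfolding Aeq by (simp add: algebra_simps)
    also have "\<dots> = (1 - \<phi>g) * Al + \<phi>g * Ag + Bl * (a * t1 + \<phi>g * t3) + Cl * x'"
      unfolding h(1,4) h(2)[symmetric] Bsum by (simp add: algebra_simps)
    also have "\<dots> = L t' x'" unfolding L_def h(3) ..
    finally show "a * (Al + Bl * t1 + Cl * x1) + b * (Av + Bv * t2 + Cl * x2) + \<phi>g * (Ag + Bg * t3 + Cl * x3) = L t' x'" .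
  qed
  have ub: "\<And>t' x' c. feasible Dl Dv Dg \<phi>g t' x' c \<Longrightarrow> mix_entropy Sl Sv Sg \<phi>g c \<le> L t' x'"
  proof -
    fix t' x' c assume fc: "feasible Dl Dv Dg \<phi>g t' x' c"
    obtain a b t1 x1 t2 x2 t3 x3 where c: "c = (a, b, (t1, x1), (t2, x2), (t3, x3))"
      by (metis prod.exhaust)
    have h: "a \<ge> 0" "b \<ge> 0" "a + b = 1 - \<phi>g" "x' = a * x1 + b * x2 + \<phi>g * x3"
      "t' = a * t1 + \<phi>g * t3" "b * t2 = \<phi>g * t3"
      "(1, t1, x1) \<in> Dl" "(1, t2, x2) \<in> Dv" "(1, t3, x3) \<in> Dg"
      using fc unfolding c feasible_def by auto
    have "a * spec Sl t1 x1 \<le> a * (Al + Bl * t1 + Cl * x1)"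
      by (rule mult_left_mono[OF tanl[OF h(7)] h(1)])
    moreover have "b * spec Sv t2 x2 \<le> b * (Av + Bv * t2 + Cl * x2)"
      by (rule mult_left_mono[OF tanv[OF h(8)] h(2)])
    moreover have "\<phi>g * spec Sg t3 x3 \<le> \<phi>g * (Ag + Bg * t3 + Cl * x3)"
      by (rule mult_left_mono[OF tang[OF h(9)] assms(4)])
    ultimately have "mix_entropy Sl Sv Sg \<phi>g c
        \<le> a * (Al + Bl * t1 + Cl * x1) + b * (Av + Bv * t2 + Cl * x2) + \<phi>g * (Ag + Bg * t3 + Cl * x3)"
      unfolding c mix_entropy_def by simp
    also have "\<dots> = L t' x'" by (rule ident[OF h(3-6)])
    finally show "mix_entropy Sl Sv Sg \<phi>g c \<le> L t' x'" .
  qed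
  define cstar where "cstar = (\<phi>l, \<phi>v, (\<tau>l, el), (\<tau>v, ev), (\<tau>g, eg))"
  have mstar: "mix_entropy Sl Sv Sg \<phi>g cstar = L \<tau> e"
  proof -
    have h: "\<phi>l + \<phi>v = 1 - \<phi>g" "e = \<phi>l * el + \<phi>v * ev + \<phi>g * eg"
      "\<tau> = \<phi>l * \<tau>l + \<phi>g * \<tau>g" "\<phi>v * \<tau>v = \<phi>g * \<tau>g"
      using opt_feas unfolding feasible_def by auto
    have "mix_entropy Sl Sv Sg \<phi>g cstar
        = \<phi>l * (Al + Bl * \<tau>l + Cl * el) + \<phi>v * (Av + Bv * \<tau>v + Cl * ev) + \<phi>g * (Ag + Bg * \<tau>g + Cl * eg)"
      unfolding cstar_def mix_entropy_def Al_def Av_def Ag_def sl_def sv_def sg_def by simp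
    also have "\<dots> = L \<tau> e" by (rule ident[OF h])
    finally show ?thesis .
  qed
  define f where "f = (\<lambda>(\<tau>', e'). s_PT Dl Dv Dg Sl Sv Sg \<tau>' e' \<phi>g)"
  define D where "D = (\<lambda>(d\<tau>::real, de::real). Bl * d\<tau> + Cl * de)"
  define cl where "cl = (\<lambda>(t'::real, x'::real). (\<phi>l, \<phi>v, (\<tau>l + (t' - \<tau>) / \<phi>l, el + (x' - e) / \<phi>l), (\<tau>v, ev), (\<tau>g, eg)))"
  define G where "G = (\<lambda>y. mix_entropy Sl Sv Sg \<phi>g (cl y))"
  have fx0: "f (\<tau>, e) = L \<tau> e"
  proof -
    have "s_PT Dl Dv Dg Sl Sv Sg \<tau> e \<phi>g = mix_entropy Sl Sv Sg \<phi>g cstar"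
      unfolding s_PT_def
      by (rule cSup_eq_maximum) (use opt_feas opt_max in \<open>auto simp: cstar_def\<close>)
    then show ?thesis unfolding f_def mstar by simp
  qed
  have Gx0: "G (\<tau>, e) = f (\<tau>, e)"
    unfolding fx0 mstar[symmetric] G_def cl_def cstar_def by simp
  have G_eq: "G = (\<lambda>y. \<phi>l * spec Sl (\<tau>l + (fst y - \<tau>) / \<phi>l) (el + (snd y - e) / \<phi>l) + \<phi>v * sv + \<phi>g * sg)"
    unfolding G_def cl_def mix_entropy_def sv_def sg_def by (auto simp: fun_eq_iff split: prod.splits)
  have hmap: "((\<lambda>y::real \<times> real. (\<tau>l + (fst y - \<tau>) / \<phi>l, el + (snd y - e) / \<phi>l)) has_derivative
      (\<lambda>y. (fst y / \<phi>l, snd y / \<phi>l))) (at (\<tau>, e))"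
    using interior(1) by (auto intro!: derivative_eq_intros)
  have pl1: "((\<lambda>(a, b). spec Sl a b) has_derivative (\<lambda>(u, v). Bl * u + Cl * v))
      (at (\<tau>l + (fst (\<tau>, e) - \<tau>) / \<phi>l, el + (snd (\<tau>, e) - e) / \<phi>l))"
    using pl(1) by simp
  have hc: "((\<lambda>y. spec Sl (\<tau>l + (fst y - \<tau>) / \<phi>l) (el + (snd y - e) / \<phi>l)) has_derivative
      (\<lambda>y. Bl * (fst y / \<phi>l) + Cl * (snd y / \<phi>l))) (at (\<tau>, e))"
    using has_derivative_compose[OF hmap pl1] by simp
  have d1: "((\<lambda>y. \<phi>l * spec Sl (\<tau>l + (fst y - \<tau>) / \<phi>l) (el + (snd y - e) / \<phi>l)) has_derivative
      (\<lambda>y. \<phi>l * (Bl * (fst y / \<phi>l) + Cl * (snd y / \<phi>l)))) (at (\<tau>, e))"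
    by (rule has_derivative_mult_right[OF hc])
  have dG0: "((\<lambda>y. \<phi>l * spec Sl (\<tau>l + (fst y - \<tau>) / \<phi>l) (el + (snd y - e) / \<phi>l) + \<phi>v * sv + \<phi>g * sg)
      has_derivative (\<lambda>y. \<phi>l * (Bl * (fst y / \<phi>l) + Cl * (snd y / \<phi>l)) + 0 + 0)) (at (\<tau>, e))"
    by (rule has_derivative_add[OF has_derivative_add[OF d1 has_derivative_const] has_derivative_const])
  have dG: "(G has_derivative D) (at (\<tau>, e))"
    unfolding G_eq
    by (rule has_derivative_eq_rhs[OF dG0])
       (use interior(1) in \<open>auto simp: D_def fun_eq_iff field_simps\<close>)
  have ev1: "\<forall>\<^sub>F y in at (\<tau>, e). (1, \<tau>l + (fst y - \<tau>) / \<phi>l, el + (snd y - e) / \<phi>l) \<in> interior Dl"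
  proof -
    have "((\<lambda>y::real \<times> real. (1::real, \<tau>l + (fst y - \<tau>) / \<phi>l, el + (snd y - e) / \<phi>l)) \<longlongrightarrow> (1, \<tau>l, el)) (at (\<tau>, e))"
      using interior(1) by (auto intro!: tendsto_eq_intros)
    then show ?thesis using topological_tendstoD interior(3) open_interior by blast
  qed
  have main: "\<forall>\<^sub>F y in at (\<tau>, e). G y \<le> f y \<and> f y \<le> f (\<tau>, e) + D (y - (\<tau>, e))"
    using ev1
  proof (rule eventually_mono)
    fix y :: "real \<times> real"
    assume hy: "(1, \<tau>l + (fst y - \<tau>) / \<phi>l, el + (snd y - e) / \<phi>l) \<in> interior Dl"
    obtain t' x' where y: "y = (t', x')" by (cases y)
    have h: "\<phi>l + \<phi>v = 1 - \<phi>g" "e = \<phi>l * el + \<phi>v * ev + \<phi>g * eg"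
      "\<tau> = \<phi>l * \<tau>l + \<phi>g * \<tau>g" "\<phi>v * \<tau>v = \<phi>g * \<tau>g"
      "(1, \<tau>v, ev) \<in> Dv" "(1, \<tau>g, eg) \<in> Dg"
      using opt_feas unfolding feasible_def by auto
    have q1: "\<phi>l * (\<tau>l + (t' - \<tau>) / \<phi>l) = \<phi>l * \<tau>l + (t' - \<tau>)"
      "\<phi>l * (el + (x' - e) / \<phi>l) = \<phi>l * el + (x' - e)"
      using interior(1) by (auto simp: field_simps)
    have fy: "feasible Dl Dv Dg \<phi>g t' x' (cl y)"
    proof -
      have m: "(1, \<tau>l + (t' - \<tau>) / \<phi>l, el + (x' - e) / \<phi>l) \<in> Dl"
        using hy interior_subset y by auto
      have e1: "x' = \<phi>l * (el + (x' - e) / \<phi>l) + \<phi>v * ev + \<phi>g * eg"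
        unfolding q1(2) using h(2) by simp
      have e2: "t' = \<phi>l * (\<tau>l + (t' - \<tau>) / \<phi>l) + \<phi>g * \<tau>g"
        unfolding q1(1) using h(3) by simp
      show ?thesis unfolding y cl_def feasible_def prod.case
        by (intro conjI m e1 e2 h(1) h(4) h(5) h(6) less_imp_le[OF interior(1)] less_imp_le[OF interior(2)])
    qed
    let ?A = "mix_entropy Sl Sv Sg \<phi>g ` {c. feasible Dl Dv Dg \<phi>g t' x' c}"
    have bdd: "bdd_above ?A" by (rule bdd_aboveI[of _ "L t' x'"]) (use ub in auto)
    have "G y \<in> ?A" using fy unfolding G_def by auto
    then have 1: "G y \<le> f y" unfolding f_def y s_PT_def using cSup_upper[OF _ bdd] by simp
    have "f y \<le> L t' x'" unfolding f_def y s_PT_def prod.case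
      by (rule cSup_least) (use fy ub in blast)+
    moreover have "L t' x' = f (\<tau>, e) + D (y - (\<tau>, e))"
      unfolding fx0 y D_def L_def by (simp add: algebra_simps)
    ultimately show "G y \<le> f y \<and> f y \<le> f (\<tau>, e) + D (y - (\<tau>, e))" using 1 by simp
  qed
  have "(f has_derivative D) (at (\<tau>, e))" by (rule squeeze[OF dG main Gx0])
  moreover have "pres Sl \<tau>l el / temp Sl \<tau>l el = Bl" "1 / temp Sl \<tau>l el = Cl"
    unfolding Pl Tl using pl(2) by auto
  ultimately show ?thesis unfolding Let_def f_def D_def by simp
qed

end
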